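(* Let $X,Y$ be finitely supported subsets of invariant sets. (1) $X$ is FSM Dedekind infinite if and only if there exists a finitely supported injective map $\mathbb N\to X$ (with $\mathbb N$ carrying the trivial action). (4) If $X$ contains no infinite uniformly supported subset, then $X$ is not FSM Dedekind infinite. (6) If neither $X$ nor $Y$ is FSM Dedekind infinite, then $X\times Y$ is not FSM Dedekind infinite. (7) If neither $X$ nor $Y$ is FSM Dedekind infinite, then $X+Y$ is not FSM Dedekind infinite.
   Context: Framework (FSM). Work in ZF with a fixed infinite set $A$ of atoms; $S_A$ is the group of bijections of $A$ fixing all but finitely many atoms; $Fix(S)$ is the set of $\pi\in S_A$ fixing each element of $S\subseteq A$; $S$ supports $x$ if $\pi\cdot x=x$ for all $\pi\in Fix(S)$. An invariant set is an $S_A$-set all of whose elements have finite supports; subsets carry $\pi\star Z=\{\pi\cdot z:z\in Z\}$ and a subset is finitely supported if it has a finite support under this action. Ordinary sets such as $\mathbb N$ carry the trivial action. Products carry $\pi\cdot(x,y)=(\pi\cdot x,\pi\cdot y)$; $X+Y=\{(0,x):x\in X\}\cup\{(1,y):y\in Y\}$ with $\pi\cdot(i,z)=(i,\pi\cdot z)$. A function is finitely supported if there is a finite $S$ such that for all $\pi\in Fix(S)$ and $x$ in the domain, $\pi$ preserves domain and codomain and $f(\pi\cdot x)=\pi\cdot f(x)$. A subset is uniformly supported if all its elements are supported by one common finite set of atoms. $X$ is FSM Dedekind infinite if there is a finitely supported injection from $X$ onto a finitely supported proper subset of $X$. *)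

theory Defs
  imports Main
begin

text \<open>Atoms are the elements of a type 'a (assumed infinite in the theorem).
  S_A: bijections of the atoms fixing all but finitely many atoms.\<close>

definition SA :: "('a \<Rightarrow> 'a) set" where
  "SA = {\<pi>. bij \<pi> \<and> finite {a. \<pi> a \<noteq> a}}"

definition Fix :: "'a set \<Rightarrow> ('a \<Rightarrow> 'a) set" where
  "Fix S = {\<pi> \<in> SA. \<forall>a\<in>S. \<pi> a = a}"

definition SA_set :: "(('a \<Rightarrow> 'a) \<Rightarrow> 'x \<Rightarrow> 'x) \<Rightarrow> 'x set \<Rightarrow> bool" where
  "SA_set act U \<longleftrightarrow>
     (\<forall>\<pi>\<in>SA. \<forall>x\<in>U. act \<pi> x \<in> U) \<and>
     (\<forall>x\<in>U. act id x = x) \<and>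
     (\<forall>\<pi>\<in>SA. \<forall>\<sigma>\<in>SA. \<forall>x\<in>U. act (\<pi> \<circ> \<sigma>) x = act \<pi> (act \<sigma> x))"

definition supports :: "(('a \<Rightarrow> 'a) \<Rightarrow> 'x \<Rightarrow> 'x) \<Rightarrow> 'a set \<Rightarrow> 'x \<Rightarrow> bool" where
  "supports act S x \<longleftrightarrow> (\<forall>\<pi>\<in>Fix S. act \<pi> x = x)"

definition fin_supp :: "(('a \<Rightarrow> 'a) \<Rightarrow> 'x \<Rightarrow> 'x) \<Rightarrow> 'x \<Rightarrow> bool" where
  "fin_supp act x \<longleftrightarrow> (\<exists>S. finite S \<and> supports act S x)"

definition invariant_set :: "(('a \<Rightarrow> 'a) \<Rightarrow> 'x \<Rightarrow> 'x) \<Rightarrow> 'x set \<Rightarrow> bool" where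
  "invariant_set act U \<longleftrightarrow> SA_set act U \<and> (\<forall>x\<in>U. fin_supp act x)"

definition fs_subset :: "(('a \<Rightarrow> 'a) \<Rightarrow> 'x \<Rightarrow> 'x) \<Rightarrow> 'x set \<Rightarrow> bool" where
  "fs_subset act X \<longleftrightarrow> (\<exists>S. finite S \<and> (\<forall>\<pi>\<in>Fix S. act \<pi> ` X = X))"

definition fs_fun :: "(('a \<Rightarrow> 'a) \<Rightarrow> 'x \<Rightarrow> 'x) \<Rightarrow> 'x set \<Rightarrow>
    (('a \<Rightarrow> 'a) \<Rightarrow> 'y \<Rightarrow> 'y) \<Rightarrow> 'y set \<Rightarrow> ('x \<Rightarrow> 'y) \<Rightarrow> bool" where
  "fs_fun actX X actY Y f \<longleftrightarrow> f ` X \<subseteq> Y \<and>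
     (\<exists>S. finite S \<and> (\<forall>\<pi>\<in>Fix S. actX \<pi> ` X = X \<and> actY \<pi> ` Y = Y \<and>
        (\<forall>x\<in>X. f (actX \<pi> x) = actY \<pi> (f x))))"

definition uniformly_supported :: "(('a \<Rightarrow> 'a) \<Rightarrow> 'x \<Rightarrow> 'x) \<Rightarrow> 'x set \<Rightarrow> bool" where
  "uniformly_supported act Z \<longleftrightarrow> (\<exists>S. finite S \<and> (\<forall>z\<in>Z. supports act S z))"

definition FSM_dedekind_infinite :: "(('a \<Rightarrow> 'a) \<Rightarrow> 'x \<Rightarrow> 'x) \<Rightarrow> 'x set \<Rightarrow> bool" where
  "FSM_dedekind_infinite act X \<longleftrightarrow>
     (\<exists>f Z. fs_subset act Z \<and> Z \<subset> X \<and> bij_betw f X Z \<and> fs_fun act X act Z f)"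

definition triv_act :: "('a \<Rightarrow> 'a) \<Rightarrow> 'n \<Rightarrow> 'n" where
  "triv_act \<pi> n = n"

definition prod_act :: "(('a \<Rightarrow> 'a) \<Rightarrow> 'x \<Rightarrow> 'x) \<Rightarrow> (('a \<Rightarrow> 'a) \<Rightarrow> 'y \<Rightarrow> 'y) \<Rightarrow>
    ('a \<Rightarrow> 'a) \<Rightarrow> 'x \<times> 'y \<Rightarrow> 'x \<times> 'y" where
  "prod_act actX actY \<pi> p = (actX \<pi> (fst p), actY \<pi> (snd p))"

text \<open>Disjoint union X+Y rendered with the HOL sum type (Inl = tag 0, Inr = tag 1).\<close>
definition sum_act :: "(('a \<Rightarrow> 'a) \<Rightarrow> 'x \<Rightarrow> 'x) \<Rightarrow> (('a \<Rightarrow> 'a) \<Rightarrow> 'y \<Rightarrow> 'y) \<Rightarrow>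
    ('a \<Rightarrow> 'a) \<Rightarrow> 'x + 'y \<Rightarrow> 'x + 'y" where
  "sum_act actX actY \<pi> s = map_sum (actX \<pi>) (actY \<pi>) s"

end

theory Submission imports Defs begin

lemma Fix_SA: "\<pi> \<in> Fix S \<Longrightarrow> \<pi> \<in> SA" by (simp add: Fix_def)
lemma Fix_mono: "T \<subseteq> S \<Longrightarrow> Fix S \<subseteq> Fix T" by (auto simp: Fix_def)

lemma inv_SA: assumes "\<pi> \<in> SA" shows "inv \<pi> \<in> SA"
proof -
  have b: "bij \<pi>" and fin: "finite {a. \<pi> a \<noteq> a}" using assms by (auto simp: SA_def)
  have "{a. inv \<pi> a \<noteq> a} = {a. \<pi> a \<noteq> a}"
  proof (intro Collect_cong iffI)
    fix a assume "inv \<pi> a \<noteq> a" thus "\<pi> a \<noteq> a" using b by (metis bij_is_inj inv_f_f)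
  next
    fix a assume "\<pi> a \<noteq> a" thus "inv \<pi> a \<noteq> a" using b by (metis bij_inv_eq_iff)
  qed
  thus ?thesis using b fin by (simp add: SA_def bij_imp_bij_inv)
qed

lemma act_inj: assumes U: "SA_set act U" and p: "\<pi> \<in> SA" shows "inj_on (act \<pi>) U"
proof (rule inj_onI)
  fix x y assume x: "x \<in> U" and y: "y \<in> U" and e: "act \<pi> x = act \<pi> y"
  have ip: "inv \<pi> \<in> SA" using inv_SA[OF p] .
  have c: "inv \<pi> \<circ> \<pi> = id" using p by (simp add: SA_def bij_is_inj)
  have "\<And>z. z \<in> U \<Longrightarrow> act (inv \<pi>) (act \<pi> z) = z"
    using U ip p c unfolding SA_set_def by metis
  thus "x = y" using x y e by metis
qed


lemma L1:
  fixes f :: "nat \<Rightarrow> 'x"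
  assumes "inj f" "fs_fun triv_act UNIV act X f"
  shows "\<exists>Z. Z \<subseteq> X \<and> infinite Z \<and> uniformly_supported act Z"
proof -
  from assms(2) obtain S where S: "finite S" and h: "\<forall>\<pi>\<in>Fix S. \<forall>n. f (triv_act \<pi> n) = act \<pi> (f n)"
    and fX: "range f \<subseteq> X" unfolding fs_fun_def by blast
  have "uniformly_supported act (range f)"
    unfolding uniformly_supported_def supports_def using S h by (auto simp: triv_act_def)
  moreover have "infinite (range f)"
  proof
    assume "finite (range f)"
    hence "finite (UNIV :: nat set)" using assms(1) by (rule finite_imageD)
    thus False by simp
  qed
  ultimately show ?thesis using fX by blast
qed

lemma L2:
  assumes Xfs: "fs_subset act X" and Z: "Z \<subseteq> X" "infinite Z" "uniformly_supported act Z"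
  shows "\<exists>f :: nat \<Rightarrow> _. inj f \<and> fs_fun triv_act UNIV act X f"
proof -
  obtain f :: "nat \<Rightarrow> _" where f: "inj f" "range f \<subseteq> Z" using infinite_countable_subset[OF Z(2)] by blast
  obtain S1 where S1: "finite S1" "\<forall>\<pi>\<in>Fix S1. act \<pi> ` X = X" using Xfs unfolding fs_subset_def by blast
  obtain S2 where S2: "finite S2" "\<forall>z\<in>Z. supports act S2 z" using Z(3) unfolding uniformly_supported_def by blast
  have "fs_fun triv_act UNIV act X f"
    unfolding fs_fun_def
  proof (intro conjI exI[of _ "S1 \<union> S2"])
    show "f ` UNIV \<subseteq> X" using f Z by blast
    show "finite (S1 \<union> S2)" using S1 S2 by simp
    show "\<forall>\<pi>\<in>Fix (S1 \<union> S2). triv_act \<pi> ` UNIV = UNIV \<and> act \<pi> ` X = X \<and> (\<forall>x\<in>UNIV. f (triv_act \<pi> x) = act \<pi> (f x))"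
    proof (rule ballI, intro conjI)
    fix \<pi> assume p: "\<pi> \<in> Fix (S1 \<union> S2)"
    have p1: "\<pi> \<in> Fix S1" and p2: "\<pi> \<in> Fix S2" using p Fix_mono[of S1 "S1 \<union> S2"] Fix_mono[of S2 "S1 \<union> S2"] by auto
    show "triv_act \<pi> ` UNIV = UNIV" by (simp add: triv_act_def)
    show "act \<pi> ` X = X" using S1 p1 by blast
    show "\<forall>x\<in>UNIV. f (triv_act \<pi> x) = act \<pi> (f x)"
    proof
      fix x :: nat
      have "f x \<in> Z" using f(2) by blast
      thus "f (triv_act \<pi> x) = act \<pi> (f x)" using S2 p2 by (simp add: supports_def triv_act_def)
    qed
    qed
  qed
  thus ?thesis using f by blast
qed

lemma L3:
  assumes fs: "\<forall>x\<in>X. fin_supp act x" and D: "FSM_dedekind_infinite act X"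
  shows "\<exists>f :: nat \<Rightarrow> _. inj f \<and> fs_fun triv_act UNIV act X f"
proof -
  obtain g Z where ZX: "Z \<subset> X" and bij: "bij_betw g X Z" and gf: "fs_fun act X act Z g"
    using D unfolding FSM_dedekind_infinite_def by blast
  have "\<exists>S. finite S \<and> (\<forall>\<pi>\<in>Fix S. act \<pi> ` X = X \<and> act \<pi> ` Z = Z \<and> (\<forall>x\<in>X. g (act \<pi> x) = act \<pi> (g x)))"
    using gf unfolding fs_fun_def by (rule conjunct2)
  then obtain Sg where Sg0: "finite Sg" "\<forall>\<pi>\<in>Fix Sg. act \<pi> ` X = X \<and> act \<pi> ` Z = Z \<and> (\<forall>x\<in>X. g (act \<pi> x) = act \<pi> (g x))"
    by (elim exE conjE) simp
  have Sg: "finite Sg" "\<forall>\<pi>\<in>Fix Sg. act \<pi> ` X = X \<and> (\<forall>x\<in>X. g (act \<pi> x) = act \<pi> (g x))"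
    using Sg0 by auto
  obtain x0 where x0: "x0 \<in> X" "x0 \<notin> Z" using ZX by blast
  obtain S0 where S0: "finite S0" "supports act S0 x0" using fs x0 unfolding fin_supp_def by blast
  define f where "f n = (g ^^ n) x0" for n
  have gX: "g ` X = Z" using bij by (simp add: bij_betw_def)
  have fS: "f (Suc n) = g (f n)" for n by (simp add: f_def)
  have fX: "f n \<in> X" for n
  proof (induction n)
    case 0 thus ?case using x0 by (simp add: f_def)
  next
    case (Suc n)
    hence "g (f n) \<in> Z" using gX by blast
    moreover have "Z \<subseteq> X" using ZX by auto
    ultimately show ?case using fS[of n] by auto
  qed
  have inj: "\<forall>m. f n = f m \<longrightarrow> n = m" for n
  proof (induction n)
    case 0
    show ?case
    proof (intro allI impI)
      fix m assume e: "f 0 = f m"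
      show "0 = m"
      proof (cases m)
        case (Suc k) hence "f m = g (f k)" using fS by simp
        hence "f m \<in> Z" using fX[of k] gX by blast
        thus ?thesis using e x0 by (simp add: f_def)
      qed simp
    qed
  next
    case (Suc n)
    show ?case
    proof (intro allI impI)
      fix m assume e: "f (Suc n) = f m"
      show "Suc n = m"
      proof (cases m)
        case 0 have "f (Suc n) = g (f n)" using fS by simp
        hence "f (Suc n) \<in> Z" using fX[of n] gX by blast
        thus ?thesis using e x0 0 by (simp add: f_def)
      next
        case (Suc k)
        hence "g (f n) = g (f k)" using e fS by simp
        moreover have "inj_on g X" using bij by (simp add: bij_betw_def)
        ultimately have "f n = f k" using fX[of n] fX[of k] by (simp add: inj_on_def)
        thus ?thesis using Suc.IH Suc by simp
      qed
    qed
  qed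
  have "fs_fun triv_act UNIV act X f"
    unfolding fs_fun_def
  proof (intro conjI exI[of _ "Sg \<union> S0"])
    show "f ` UNIV \<subseteq> X" using fX by blast
    show "finite (Sg \<union> S0)" using Sg S0 by simp
    show "\<forall>\<pi>\<in>Fix (Sg \<union> S0). triv_act \<pi> ` UNIV = UNIV \<and> act \<pi> ` X = X \<and> (\<forall>x\<in>UNIV. f (triv_act \<pi> x) = act \<pi> (f x))"
    proof (rule ballI, intro conjI)
    fix \<pi> assume p: "\<pi> \<in> Fix (Sg \<union> S0)"
    have p1: "\<pi> \<in> Fix Sg" and p2: "\<pi> \<in> Fix S0" using p Fix_mono[of Sg "Sg \<union> S0"] Fix_mono[of S0 "Sg \<union> S0"] by auto
    show "triv_act \<pi> ` UNIV = UNIV" by (simp add: triv_act_def)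
    show "act \<pi> ` X = X" using Sg p1 by blast
    have "act \<pi> (f n) = f n" for n
    proof (induction n)
      case 0 thus ?case using S0 p2 by (simp add: f_def supports_def)
    next
      case (Suc n)
      have "act \<pi> (f (Suc n)) = act \<pi> (g (f n))" using fS by simp
      also have "\<dots> = g (act \<pi> (f n))" using Sg(2) p1 fX[of n] by simp
      also have "\<dots> = f (Suc n)" using Suc fS by simp
      finally show ?case .
    qed
    thus "\<forall>x\<in>UNIV. f (triv_act \<pi> x) = act \<pi> (f x)" by (simp add: triv_act_def)
    qed
  qed
  moreover have "inj f" using inj by (auto simp: inj_def)
  ultimately show ?thesis by blast
qed

lemma L4:
  fixes f :: "nat \<Rightarrow> 'x"
  assumes U: "SA_set act U" and XU: "X \<subseteq> U" and f: "inj f" "fs_fun triv_act UNIV act X f"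
  shows "FSM_dedekind_infinite act X"
proof -
  from f(2) obtain S where S: "finite S" and
    h: "\<forall>\<pi>\<in>Fix S. act \<pi> ` X = X \<and> (\<forall>n. f (triv_act \<pi> n) = act \<pi> (f n))"
    and fX: "range f \<subseteq> X" unfolding fs_fun_def by blast
  have fixf: "act \<pi> (f n) = f n" if "\<pi> \<in> Fix S" for \<pi> n using h that by (simp add: triv_act_def)
  define g where "g x = (if x \<in> range f then f (Suc (inv f x)) else x)" for x
  have g1: "g (f n) = f (Suc n)" for n using f(1) by (simp add: g_def)
  have g2: "x \<notin> range f \<Longrightarrow> g x = x" for x by (simp add: g_def)
  define Z where "Z = X - {f 0}"
  have injg: "inj_on g X"
  proof (rule inj_onI)
    fix x y assume x: "x \<in> X" and y: "y \<in> X" and e: "g x = g y"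
    show "x = y"
    proof (cases "x \<in> range f"; cases "y \<in> range f")
      assume "x \<in> range f" "y \<in> range f"
      then obtain n m where nm: "x = f n" "y = f m" by blast
      hence "f (Suc n) = f (Suc m)" using e g1 by simp
      hence "Suc n = Suc m" using f(1) by (simp add: inj_eq)
      thus ?thesis using nm by simp
    next
      assume "x \<in> range f" "y \<notin> range f" thus ?thesis using e g1 g2 by auto
    next
      assume "x \<notin> range f" "y \<in> range f" thus ?thesis using e g1 g2 by auto
    next
      assume "x \<notin> range f" "y \<notin> range f" thus ?thesis using e g2 by auto
    qed
  qed
  have imgg: "g ` X = Z"
  proof
    show "g ` X \<subseteq> Z"
    proof
      fix y assume "y \<in> g ` X"
      then obtain x where x: "x \<in> X" "y = g x" by blast
      show "y \<in> Z"
      proof (cases "x \<in> range f")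
        case True then obtain n where "x = f n" by blast
        thus ?thesis using x g1 fX f(1) by (auto simp: Z_def inj_def)
      next
        case False thus ?thesis using x g2 by (auto simp: Z_def)
      qed
    qed
    show "Z \<subseteq> g ` X"
    proof
      fix y assume y: "y \<in> Z"
      show "y \<in> g ` X"
      proof (cases "y \<in> range f")
        case True then obtain n where n: "y = f n" by blast
        with y have "n \<noteq> 0" unfolding Z_def by (metis DiffD2 singletonI)
        then obtain m where "n = Suc m" using not0_implies_Suc by blast
        thus ?thesis using n g1 fX by (metis image_eqI range_subsetD)
      next
        case False thus ?thesis using y g2 by (metis DiffD1 Z_def image_eqI)
      qed
    qed
  qed
  have injp: "inj_on (act \<pi>) U" if "\<pi> \<in> Fix S" for \<pi> using act_inj[OF U Fix_SA[OF that]] .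
  have eqv: "g (act \<pi> x) = act \<pi> (g x)" if p: "\<pi> \<in> Fix S" and x: "x \<in> X" for \<pi> x
  proof (cases "x \<in> range f")
    case True then obtain n where "x = f n" by blast
    thus ?thesis using g1 fixf p by simp
  next
    case False
    have "act \<pi> x \<notin> range f"
    proof
      assume "act \<pi> x \<in> range f"
      then obtain n where "act \<pi> x = f n" by blast
      hence "act \<pi> x = act \<pi> (f n)" using fixf p by simp
      hence "x = f n" using injp[OF p] x fX XU by (meson inj_onD range_subsetD subsetD)
      thus False using False by blast
    qed
    thus ?thesis using False g2 by simp
  qed
  have Zimg: "act \<pi> ` Z = Z" if p: "\<pi> \<in> Fix S" for \<pi>
  proof -
    have "act \<pi> ` Z = act \<pi> ` X - act \<pi> ` {f 0}"
      unfolding Z_def using fX XU by (intro inj_on_image_set_diff[OF injp[OF p]]) auto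
    thus ?thesis using h p fixf by (simp add: Z_def)
  qed
  show ?thesis
    unfolding FSM_dedekind_infinite_def
  proof (intro exI[of _ g] exI[of _ Z] conjI)
    show "fs_subset act Z" unfolding fs_subset_def using S Zimg by blast
    show "Z \<subset> X" using fX by (auto simp: Z_def)
    show "bij_betw g X Z" using injg imgg by (simp add: bij_betw_def)
    show "fs_fun act X act Z g" unfolding fs_fun_def
    proof (intro conjI exI[of _ S])
      show "g ` X \<subseteq> Z" using imgg by simp
      show "finite S" by (rule S)
      show "\<forall>\<pi>\<in>Fix S. act \<pi> ` X = X \<and> act \<pi> ` Z = Z \<and> (\<forall>x\<in>X. g (act \<pi> x) = act \<pi> (g x))"
      proof (rule ballI, intro conjI)
        fix \<pi> assume p: "\<pi> \<in> Fix S"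
        show "act \<pi> ` X = X" using h p by simp
        show "act \<pi> ` Z = Z" using Zimg p by simp
        show "\<forall>x\<in>X. g (act \<pi> x) = act \<pi> (g x)" using eqv p by simp
      qed
    qed
  qed
qed


lemma fs_pair:
  assumes "fin_supp actX x" "fin_supp actY y"
  shows "fin_supp (prod_act actX actY) (x, y)"
proof -
  obtain S1 S2 where "finite S1" "supports actX S1 x" "finite S2" "supports actY S2 y"
    using assms unfolding fin_supp_def by blast
  moreover have "Fix (S1 \<union> S2) \<subseteq> Fix S1" "Fix (S1 \<union> S2) \<subseteq> Fix S2" by (simp_all add: Fix_mono)
  ultimately have "finite (S1 \<union> S2) \<and> supports (prod_act actX actY) (S1 \<union> S2) (x, y)"
    unfolding supports_def prod_act_def by auto
  thus ?thesis unfolding fin_supp_def by blast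
qed

lemma fs_inl: "fin_supp actX x \<Longrightarrow> fin_supp (sum_act actX actY) (Inl x)"
  unfolding fin_supp_def supports_def sum_act_def by auto

lemma fs_inr: "fin_supp actY y \<Longrightarrow> fin_supp (sum_act actX actY) (Inr y)"
  unfolding fin_supp_def supports_def sum_act_def by auto

lemma DI_iff_unif:
  assumes U: "invariant_set act U" and XU: "X \<subseteq> U" and Xfs: "fs_subset act X"
  shows "FSM_dedekind_infinite act X \<longleftrightarrow> (\<exists>Z. Z \<subseteq> X \<and> infinite Z \<and> uniformly_supported act Z)"
proof
  have fs: "\<forall>x\<in>X. fin_supp act x" using U XU unfolding invariant_set_def by blast
  assume "FSM_dedekind_infinite act X"
  then obtain f :: "nat \<Rightarrow> _" where "inj f" "fs_fun triv_act UNIV act X f" using L3[OF fs] by blast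
  thus "\<exists>Z. Z \<subseteq> X \<and> infinite Z \<and> uniformly_supported act Z" by (rule L1)
next
  assume "\<exists>Z. Z \<subseteq> X \<and> infinite Z \<and> uniformly_supported act Z"
  then obtain Z where "Z \<subseteq> X" "infinite Z" "uniformly_supported act Z" by blast
  then obtain f :: "nat \<Rightarrow> _" where "inj f" "fs_fun triv_act UNIV act X f" using L2[OF Xfs] by blast
  thus "FSM_dedekind_infinite act X" using L4 U XU unfolding invariant_set_def by blast
qed

theorem mainTheorem9:
  fixes actX :: "('a \<Rightarrow> 'a) \<Rightarrow> 'x \<Rightarrow> 'x" and U :: "'x set" and X :: "'x set"
    and actY :: "('a \<Rightarrow> 'a) \<Rightarrow> 'y \<Rightarrow> 'y" and V :: "'y set" and Y :: "'y set"
  assumes atoms_inf: "infinite (UNIV :: 'a set)"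
    and U: "invariant_set actX U" and XU: "X \<subseteq> U" and Xfs: "fs_subset actX X"
    and V: "invariant_set actY V" and YV: "Y \<subseteq> V" and Yfs: "fs_subset actY Y"
  shows "(FSM_dedekind_infinite actX X \<longleftrightarrow>
            (\<exists>f :: nat \<Rightarrow> 'x. inj f \<and> fs_fun triv_act UNIV actX X f))
       \<and> ((\<nexists>Z. Z \<subseteq> X \<and> infinite Z \<and> uniformly_supported actX Z)
            \<longrightarrow> \<not> FSM_dedekind_infinite actX X)
       \<and> (\<not> FSM_dedekind_infinite actX X \<and> \<not> FSM_dedekind_infinite actY Y
            \<longrightarrow> \<not> FSM_dedekind_infinite (prod_act actX actY) (X \<times> Y))
       \<and> (\<not> FSM_dedekind_infinite actX X \<and> \<not> FSM_dedekind_infinite actY Y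
            \<longrightarrow> \<not> FSM_dedekind_infinite (sum_act actX actY) (X <+> Y))"
proof (intro conjI impI)
  have fsX: "\<forall>x\<in>X. fin_supp actX x" using U XU unfolding invariant_set_def by blast
  have fsY: "\<forall>y\<in>Y. fin_supp actY y" using V YV unfolding invariant_set_def by blast
  have UX: "SA_set actX U" using U unfolding invariant_set_def by blast
  have dX: "FSM_dedekind_infinite actX X \<longleftrightarrow> (\<exists>Z. Z \<subseteq> X \<and> infinite Z \<and> uniformly_supported actX Z)"
    by (rule DI_iff_unif[OF U XU Xfs])
  have dY: "FSM_dedekind_infinite actY Y \<longleftrightarrow> (\<exists>Z. Z \<subseteq> Y \<and> infinite Z \<and> uniformly_supported actY Z)"
    by (rule DI_iff_unif[OF V YV Yfs])
  show "FSM_dedekind_infinite actX X \<longleftrightarrow> (\<exists>f :: nat \<Rightarrow> 'x. inj f \<and> fs_fun triv_act UNIV actX X f)"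
  proof
    assume "FSM_dedekind_infinite actX X"
    thus "\<exists>f :: nat \<Rightarrow> 'x. inj f \<and> fs_fun triv_act UNIV actX X f" by (rule L3[OF fsX])
  next
    assume "\<exists>f :: nat \<Rightarrow> 'x. inj f \<and> fs_fun triv_act UNIV actX X f"
    then obtain f :: "nat \<Rightarrow> 'x" where "inj f" "fs_fun triv_act UNIV actX X f" by blast
    thus "FSM_dedekind_infinite actX X" by (rule L4[OF UX XU])
  qed
  show "(\<nexists>Z. Z \<subseteq> X \<and> infinite Z \<and> uniformly_supported actX Z) \<Longrightarrow> \<not> FSM_dedekind_infinite actX X"
    using dX by blast
  show "\<not> FSM_dedekind_infinite (prod_act actX actY) (X \<times> Y)"
    if nd: "\<not> FSM_dedekind_infinite actX X \<and> \<not> FSM_dedekind_infinite actY Y"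
  proof
    assume D: "FSM_dedekind_infinite (prod_act actX actY) (X \<times> Y)"
    have fsP: "\<forall>p\<in>X \<times> Y. fin_supp (prod_act actX actY) p"
    proof
      fix p assume "p \<in> X \<times> Y"
      then obtain x y where "p = (x, y)" "x \<in> X" "y \<in> Y" by blast
      thus "fin_supp (prod_act actX actY) p" using fsX fsY fs_pair[of actX x actY y] by simp
    qed
    obtain f :: "nat \<Rightarrow> 'x \<times> 'y" where "inj f" "fs_fun triv_act UNIV (prod_act actX actY) (X \<times> Y) f"
      using L3[OF fsP D] by blast
    then obtain Z where Z: "Z \<subseteq> X \<times> Y" "infinite Z" "uniformly_supported (prod_act actX actY) Z"
      using L1 by metis
    obtain S where S: "finite S" "\<forall>z\<in>Z. \<forall>\<pi>\<in>Fix S. prod_act actX actY \<pi> z = z"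
      using Z(3) unfolding uniformly_supported_def supports_def by blast
    have u1: "uniformly_supported actX (fst ` Z)"
      unfolding uniformly_supported_def supports_def using S by (force simp: prod_act_def)
    have u2: "uniformly_supported actY (snd ` Z)"
      unfolding uniformly_supported_def supports_def using S by (force simp: prod_act_def)
    have "Z \<subseteq> fst ` Z \<times> snd ` Z" by force
    hence "infinite (fst ` Z) \<or> infinite (snd ` Z)" using Z(2) finite_subset by blast
    moreover have "fst ` Z \<subseteq> X" "snd ` Z \<subseteq> Y" using Z(1) by auto
    ultimately show False using u1 u2 dX dY nd by metis
  qed
  show "\<not> FSM_dedekind_infinite (sum_act actX actY) (X <+> Y)"
    if nd: "\<not> FSM_dedekind_infinite actX X \<and> \<not> FSM_dedekind_infinite actY Y"
  proof
    assume D: "FSM_dedekind_infinite (sum_act actX actY) (X <+> Y)"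
    have fsP: "\<forall>p\<in>X <+> Y. fin_supp (sum_act actX actY) p"
    proof
      fix p assume "p \<in> X <+> Y"
      thus "fin_supp (sum_act actX actY) p" using fsX fsY fs_inl[of actX _ actY] fs_inr[of actY _ actX] by (auto elim: PlusE)
    qed
    obtain f :: "nat \<Rightarrow> 'x + 'y" where "inj f" "fs_fun triv_act UNIV (sum_act actX actY) (X <+> Y) f"
      using L3[OF fsP D] by blast
    then obtain Z where Z: "Z \<subseteq> X <+> Y" "infinite Z" "uniformly_supported (sum_act actX actY) Z"
      using L1 by metis
    obtain S where S: "finite S" "\<forall>z\<in>Z. \<forall>\<pi>\<in>Fix S. sum_act actX actY \<pi> z = z"
      using Z(3) unfolding uniformly_supported_def supports_def by blast
    define A where "A = {x. Inl x \<in> Z}"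
    define B where "B = {y. Inr y \<in> Z}"
    have u1: "uniformly_supported actX A"
      unfolding uniformly_supported_def supports_def A_def using S by (force simp: sum_act_def)
    have u2: "uniformly_supported actY B"
      unfolding uniformly_supported_def supports_def B_def using S by (force simp: sum_act_def)
    have "Z \<subseteq> Inl ` A \<union> Inr ` B"
    proof
      fix z assume "z \<in> Z" thus "z \<in> Inl ` A \<union> Inr ` B" unfolding A_def B_def by (cases z) auto
    qed
    hence "infinite A \<or> infinite B" using Z(2) finite_subset by blast
    moreover have "A \<subseteq> X" "B \<subseteq> Y" using Z(1) unfolding A_def B_def by auto
    ultimately show False using u1 u2 dX dY nd by metis
  qed
qed

end
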